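(* Consider a deterministic sequential oligopoly $\boldsymbol{n}=(n_1,\dots,n_T)$ in which firm $i$ has payoff $x_i\,a_i(\overline{X}_c^i-X)$ with $a_i>0$ and commonly known parameters $\overline{X}_c^i$, and all equilibria considered are interior. Suppose the equilibrium quantities are $(x_1^*,\dots,x_n^* )$ and that these quantities remain the same when one additional firm, with payoff $x_{n+1}a_{n+1}(\overline{X}_c-X)$, is added alone in a new final period $T+1$. Then $\overline{X}_c^i=\overline{X}_c$ for all firms $i=1,\dots,n$.
   Context: $X=\sum_i x_i$ is total quantity. Interpretation: $\overline{X}_c^i=\overline{X}^i-c_i/a_i$ where firm $i$ has constant marginal cost $c_i$ and inverse demand $a_i(\overline{X}^i-X)$. Firms are partitioned into periods $\mathcal{I}_1,\dots,\mathcal{I}_T$; a firm in period $t$ observes the cumulative quantity of all firms in earlier periods and chooses simultaneously with the other firms of period $t$; equilibrium is subgame perfect. *)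

theory Defs
  imports Complex_Main
begin

(* Sequential oligopoly with firms 1..N, period assignment per :: nat => nat (values in 1..T).
   A strategy profile s assigns to each firm i a function s i :: real => real mapping the
   cumulative quantity Y of all firms in earlier periods to firm i's quantity. *)

definition stage_sum :: "nat \<Rightarrow> (nat \<Rightarrow> nat) \<Rightarrow> (nat \<Rightarrow> real \<Rightarrow> real) \<Rightarrow> nat \<Rightarrow> real \<Rightarrow> real" where
  "stage_sum N per s t Y = (\<Sum>i\<in>{i\<in>{1..N}. per i = t}. s i Y)"

primrec cont_k :: "nat \<Rightarrow> (nat \<Rightarrow> nat) \<Rightarrow> (nat \<Rightarrow> real \<Rightarrow> real) \<Rightarrow> nat \<Rightarrow> nat \<Rightarrow> real \<Rightarrow> real" where
  "cont_k N per s 0 t Y = 0"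
| "cont_k N per s (Suc k) t Y =
     (let q = stage_sum N per s t Y in q + cont_k N per s k (Suc t) (Y + q))"

definition cont :: "nat \<Rightarrow> nat \<Rightarrow> (nat \<Rightarrow> nat) \<Rightarrow> (nat \<Rightarrow> real \<Rightarrow> real) \<Rightarrow> nat \<Rightarrow> real \<Rightarrow> real" where
  "cont N T per s t Y = cont_k N per s (T + 1 - t) t Y"

definition total_dev :: "nat \<Rightarrow> nat \<Rightarrow> (nat \<Rightarrow> nat) \<Rightarrow> (nat \<Rightarrow> real \<Rightarrow> real) \<Rightarrow> nat \<Rightarrow> real \<Rightarrow> real \<Rightarrow> real" where
  "total_dev N T per s i Y x =
     (let others = (\<Sum>j\<in>{j\<in>{1..N}. per j = per i} - {i}. s j Y)
      in Y + x + others + cont N T per s (Suc (per i)) (Y + x + others))"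

definition payoff_dev :: "nat \<Rightarrow> nat \<Rightarrow> (nat \<Rightarrow> nat) \<Rightarrow> (nat \<Rightarrow> real) \<Rightarrow> (nat \<Rightarrow> real) \<Rightarrow> (nat \<Rightarrow> real \<Rightarrow> real) \<Rightarrow> nat \<Rightarrow> real \<Rightarrow> real \<Rightarrow> real" where
  "payoff_dev N T per a Xb s i Y x = x * a i * (Xb i - total_dev N T per s i Y x)"

(* subgame perfect equilibrium: at every history Y of its period, no firm gains by deviating *)
definition is_SPE :: "nat \<Rightarrow> nat \<Rightarrow> (nat \<Rightarrow> nat) \<Rightarrow> (nat \<Rightarrow> real) \<Rightarrow> (nat \<Rightarrow> real) \<Rightarrow> (nat \<Rightarrow> real \<Rightarrow> real) \<Rightarrow> bool" where
  "is_SPE N T per a Xb s \<longleftrightarrow>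
     (\<forall>i\<in>{1..N}. \<forall>Y x. payoff_dev N T per a Xb s i Y x \<le> payoff_dev N T per a Xb s i Y (s i Y))"

primrec hist :: "nat \<Rightarrow> (nat \<Rightarrow> nat) \<Rightarrow> (nat \<Rightarrow> real \<Rightarrow> real) \<Rightarrow> nat \<Rightarrow> real" where
  "hist N per s 0 = 0"
| "hist N per s (Suc t) = hist N per s t + stage_sum N per s t (hist N per s t)"

definition outcome :: "nat \<Rightarrow> (nat \<Rightarrow> nat) \<Rightarrow> (nat \<Rightarrow> real \<Rightarrow> real) \<Rightarrow> nat \<Rightarrow> real" where
  "outcome N per s i = s i (hist N per s (per i))"

end

theory Submission
  imports Defs
begin

definition G :: "nat \<Rightarrow> nat \<Rightarrow> (nat \<Rightarrow> nat) \<Rightarrow> (nat \<Rightarrow> real \<Rightarrow> real) \<Rightarrow> nat \<Rightarrow> real \<Rightarrow> real" where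
  "G N T per s t Y = Y + cont N T per s t Y"

definition ks :: "nat \<Rightarrow> (nat \<Rightarrow> nat) \<Rightarrow> nat \<Rightarrow> nat" where
  "ks N per u = card {i\<in>{1..N}. per i = u}"

definition slope :: "nat \<Rightarrow> nat \<Rightarrow> (nat \<Rightarrow> nat) \<Rightarrow> nat \<Rightarrow> real" where
  "slope N T per t = (\<Prod>u\<in>{t..T}. 1 / (real (ks N per u) + 1))"

lemma G_step:
  assumes "t \<le> T"
  shows "G N T per s t Y = G N T per s (Suc t) (Y + stage_sum N per s t Y)"
proof -
  have e1: "T + 1 - t = Suc (T - t)" using assms by simp
  have e2: "T + 1 - Suc t = T - t" by simp
  show ?thesis unfolding G_def cont_def e1 e2 by (simp add: Let_def algebra_simps)
qed

lemma G_last: "G N T per s (Suc T) Y = Y"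
  by (simp add: G_def cont_def)

lemma maxim:
  fixes a m c x0 :: real
  assumes a: "a > 0" and m: "m > 0" and h: "\<forall>x. x*a*(c - m*x) \<le> x0*a*(c-m*x0)"
  shows "2*m*x0 = c"
proof -
  have h1: "(c/(2*m))*a*(c - m*(c/(2*m))) \<le> x0*a*(c-m*x0)" using h by blast
  have e: "(c/(2*m))*a*(c - m*(c/(2*m))) = a*c^2/(4*m)" using m
    by (simp add: field_simps power2_eq_square)
  have "a*c^2/(4*m) \<le> x0*a*(c-m*x0)" using h1 e by simp
  hence h2: "a*c^2 \<le> (x0*a*(c-m*x0))*(4*m)" using pos_divide_le_eq[of "4*m"] m by simp
  have "a*(2*m*x0-c)^2 = a*c^2 - 4*m*(x0*a*(c-m*x0))"
    by (simp add: power2_eq_square algebra_simps)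
  hence "a*(2*m*x0-c)^2 \<le> 0" using h2 by (simp add: algebra_simps)
  hence "(2*m*x0-c)^2 \<le> 0" using a by (simp add: mult_le_0_iff)
  hence "(2*m*x0-c)^2 = 0" by (meson order_antisym zero_le_power2)
  thus ?thesis by simp
qed

lemma foc:
  assumes spe: "is_SPE N T per a Xb s" and i: "i \<in> {1..N}" and ai: "a i > 0" and m: "m > 0"
    and Gaff: "\<forall>Z. G N T per s (Suc (per i)) Z = b + m*Z"
  shows "m * s i Y = Xb i - G N T per s (Suc (per i)) (Y + stage_sum N per s (per i) Y)"
proof -
  define P where "P = {j\<in>{1..N}. per j = per i}"
  define oth where "oth = (\<Sum>j\<in>P - {i}. s j Y)"
  have fin: "finite P" by (simp add: P_def)
  have iP: "i \<in> P" using i P_def by simp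
  have ss0: "stage_sum N per s (per i) Y = (\<Sum>j\<in>P. s j Y)" by (simp add: stage_sum_def P_def)
  have ss: "stage_sum N per s (per i) Y = s i Y + oth"
    using ss0 sum.remove[OF fin iP, of "\<lambda>j. s j Y"] oth_def by simp
  have td0: "\<And>x. total_dev N T per s i Y x = G N T per s (Suc (per i)) (Y + x + oth)"
    by (simp add: total_dev_def G_def Let_def oth_def P_def)
  have pd: "\<And>x. payoff_dev N T per a Xb s i Y x = x * a i * ((Xb i - b - m*(Y+oth)) - m*x)"
    by (simp add: payoff_dev_def td0 Gaff algebra_simps)
  have "\<forall>x. payoff_dev N T per a Xb s i Y x \<le> payoff_dev N T per a Xb s i Y (s i Y)"
    using spe i unfolding is_SPE_def by blast
  hence "\<forall>x. x * a i * ((Xb i - b - m*(Y+oth)) - m*x) \<le> s i Y * a i * ((Xb i - b - m*(Y+oth)) - m*(s i Y))"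
    by (simp add: pd)
  hence k: "2*m*s i Y = Xb i - b - m*(Y+oth)" using maxim ai m by blast
  have "G N T per s (Suc (per i)) (Y + stage_sum N per s (per i) Y) = b + m*(Y + (s i Y + oth))"
    using Gaff ss by simp
  thus ?thesis using k by (simp add: algebra_simps)
qed

lemma slope_pos: "slope N T per t > 0"
  unfolding slope_def by (rule prod_pos) (simp add: add_pos_nonneg)

lemma slope_step: "t \<le> T \<Longrightarrow> slope N T per t = slope N T per (Suc t) / (real (ks N per t) + 1)"
proof -
  assume "t \<le> T"
  hence "{t..T} = insert t {Suc t..T}" by auto
  thus ?thesis unfolding slope_def by simp
qed

lemma slope_last: "slope N T per (Suc T) = 1"
  by (simp add: slope_def)

lemma affine:
  assumes spe: "is_SPE N T per a Xb s" and apos: "\<forall>i\<in>{1..N}. a i > 0"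
  shows "t \<le> Suc T \<Longrightarrow> \<exists>b. \<forall>Y. G N T per s t Y = b + slope N T per t * Y"
proof (induction "Suc T - t" arbitrary: t)
  case 0
  hence "t = Suc T" by simp
  thus ?case by (simp add: G_last slope_last)
next
  case (Suc d)
  hence tT: "t \<le> T" by simp
  have dd: "d = Suc T - Suc t" using Suc.hyps(2) by simp
  from Suc.hyps(1)[OF dd] tT obtain b where Gaff: "\<forall>Z. G N T per s (Suc t) Z = b + slope N T per (Suc t) * Z"
    by auto
  define m where "m = slope N T per (Suc t)"
  have m: "m > 0" by (simp add: m_def slope_pos)
  define P where "P = {i\<in>{1..N}. per i = t}"
  define kr where "kr = real (card P)"
  define SX where "SX = (\<Sum>i\<in>P. Xb i)"
  have fin: "finite P" by (simp add: P_def)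
  have slt: "slope N T per t = m / (kr + 1)"
    using slope_step[OF tT] by (simp add: m_def kr_def ks_def P_def)
  have "\<forall>Y. G N T per s t Y = (b + SX)/(kr+1) + slope N T per t * Y"
  proof
    fix Y
    define S where "S = stage_sum N per s t Y"
    have S: "S = (\<Sum>i\<in>P. s i Y)" by (simp add: S_def stage_sum_def P_def)
    have fi: "\<And>i. i \<in> P \<Longrightarrow> m * s i Y = Xb i - (b + m*(Y + S))"
    proof -
      fix i assume iP: "i \<in> P"
      hence i: "i \<in> {1..N}" and pt: "per i = t" by (auto simp: P_def)
      have "m * s i Y = Xb i - G N T per s (Suc (per i)) (Y + stage_sum N per s (per i) Y)"
        using foc[OF spe i _ m] apos i Gaff pt m_def by auto
      thus "m * s i Y = Xb i - (b + m*(Y + S))" using Gaff pt m_def S_def by simp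
    qed
    have "m * S = (\<Sum>i\<in>P. m * s i Y)" by (simp add: S sum_distrib_left)
    also have "\<dots> = (\<Sum>i\<in>P. Xb i - (b + m*(Y + S)))" using fi by (rule sum.cong[OF refl])
    also have "\<dots> = SX - kr * (b + m*(Y+S))" by (simp add: sum_subtractf SX_def kr_def)
    finally have eq: "m * S = SX - kr * (b + m*(Y+S))" .
    have "(b + m*(Y+S)) * (kr+1) = b + SX + m*Y" using eq by (simp add: algebra_simps)
    hence "b + m*(Y+S) = (b + SX + m*Y)/(kr+1)"
      by (simp add: kr_def eq_divide_eq add_pos_nonneg)
    moreover have "G N T per s t Y = b + m*(Y+S)"
      using G_step[OF tT] Gaff m_def S_def by simp
    ultimately show "G N T per s t Y = (b + SX)/(kr+1) + slope N T per t * Y"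
      using slt by (simp add: add_divide_distrib)
  qed
  thus ?case by blast
qed

lemma onpath:
  shows "t \<le> Suc T \<Longrightarrow> G N T per s t (hist N per s t) = hist N per s (Suc T)"
proof (induction "Suc T - t" arbitrary: t)
  case 0
  hence "t = Suc T" by simp
  thus ?case by (simp add: G_last)
next
  case (Suc d)
  hence tT: "t \<le> T" by simp
  have "G N T per s t (hist N per s t) = G N T per s (Suc t) (hist N per s (Suc t))"
    using G_step[OF tT] by simp
  also have "\<dots> = hist N per s (Suc T)"
    using Suc.hyps(1)[of "Suc t"] Suc.hyps(2) tT by simp
  finally show ?case .
qed

theorem proposition4:
  fixes N T :: nat and per :: "nat \<Rightarrow> nat"
    and a Xb :: "nat \<Rightarrow> real" and a_new Xc :: real
    and s s' :: "nat \<Rightarrow> real \<Rightarrow> real"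
  assumes periods: "per ` {1..N} = {1..T}"
    and a_pos: "\<forall>i\<in>{1..N}. a i > 0"
    and a_new_pos: "a_new > 0"
    and spe: "is_SPE N T per a Xb s"
    and spe': "is_SPE (N + 1) (T + 1) (per(N + 1 := T + 1)) (a(N + 1 := a_new)) (Xb(N + 1 := Xc)) s'"
    and interior: "\<forall>i\<in>{1..N}. outcome N per s i > 0"
    and interior': "\<forall>i\<in>{1..N+1}. outcome (N + 1) (per(N + 1 := T + 1)) s' i > 0"
    and same: "\<forall>i\<in>{1..N}. outcome (N + 1) (per(N + 1 := T + 1)) s' i = outcome N per s i"
  shows "\<forall>i\<in>{1..N}. Xb i = Xc"
proof
  define per1 where "per1 = per(Suc N := Suc T)"
  define a1 where "a1 = a(Suc N := a_new)"
  define Xb1 where "Xb1 = Xb(Suc N := Xc)"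
  have spe1: "is_SPE (Suc N) (Suc T) per1 a1 Xb1 s'" using spe' by (simp add: per1_def a1_def Xb1_def)
  have same1: "\<forall>i\<in>{1..N}. outcome (Suc N) per1 s' i = outcome N per s i"
    using same by (simp add: per1_def)
  have apos1: "\<forall>i\<in>{1..Suc N}. a1 i > 0" using a_pos a_new_pos by (auto simp: a1_def)
  have perN: "\<And>j. j \<in> {1..N} \<Longrightarrow> per j \<in> {1..T}" using periods by blast
  have setsame: "\<And>u. u \<le> T \<Longrightarrow> {j\<in>{1..Suc N}. per1 j = u} = {j\<in>{1..N}. per j = u}"
    by (auto simp: per1_def)
  have setlast: "{j\<in>{1..Suc N}. per1 j = Suc T} = {Suc N}"
    using perN by (force simp: per1_def)
  have slope1: "\<And>t. t \<le> Suc T \<Longrightarrow> slope (Suc N) (Suc T) per1 t = slope N T per t / 2"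
  proof -
    fix t assume tT: "t \<le> Suc T"
    have ins: "{t..Suc T} = insert (Suc T) {t..T}" using tT by auto
    have pc: "(\<Prod>u\<in>{t..T}. 1 / (real (ks (Suc N) per1 u) + 1)) = (\<Prod>u\<in>{t..T}. 1 / (real (ks N per u) + 1))"
    proof (rule prod.cong[OF refl])
      fix u assume "u \<in> {t..T}"
      hence "u \<le> T" by simp
      thus "1 / (real (ks (Suc N) per1 u) + 1) = 1 / (real (ks N per u) + 1)"
        unfolding ks_def using setsame by simp
    qed
    have kl: "ks (Suc N) per1 (Suc T) = 1" unfolding ks_def setlast by simp
    show "slope (Suc N) (Suc T) per1 t = slope N T per t / 2"
      unfolding slope_def ins using pc kl by simp
  qed
  have histeq: "\<And>u. u \<le> Suc T \<Longrightarrow> hist (Suc N) per1 s' u = hist N per s u"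
  proof -
    fix u show "u \<le> Suc T \<Longrightarrow> hist (Suc N) per1 s' u = hist N per s u"
    proof (induction u)
      case 0 then show ?case by simp
    next
      case (Suc u)
      hence uT: "u \<le> T" and ih: "hist (Suc N) per1 s' u = hist N per s u" by auto
      have "stage_sum (Suc N) per1 s' u (hist (Suc N) per1 s' u) = stage_sum N per s u (hist N per s u)"
        unfolding stage_sum_def setsame[OF uT]
      proof (rule sum.cong[OF refl])
        fix j assume j: "j \<in> {j \<in> {1..N}. per j = u}"
        hence p1: "per1 j = u" and p0: "per j = u" and jN: "j \<in> {1..N}" by (auto simp: per1_def)
        have "outcome (Suc N) per1 s' j = outcome N per s j" using same1 jN by blast
        thus "s' j (hist (Suc N) per1 s' u) = s j (hist N per s u)"
          unfolding outcome_def p1 p0 ih .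
      qed
      thus ?case using ih by simp
    qed
  qed
  define H where "H = hist N per s (Suc T)"
  have H1: "hist (Suc N) per1 s' (Suc T) = H" unfolding H_def by (rule histeq) simp
  define xn where "xn = s' (Suc N) H"
  have ssl: "\<And>Y. stage_sum (Suc N) per1 s' (Suc T) Y = s' (Suc N) Y"
    unfolding stage_sum_def setlast by simp
  obtain b2 where G2: "\<forall>Y. G (Suc N) (Suc T) per1 s' (Suc (Suc T)) Y = b2 + slope (Suc N) (Suc T) per1 (Suc (Suc T)) * Y"
    using affine[OF spe1 apos1, of "Suc (Suc T)"] by auto
  have pN: "per1 (Suc N) = Suc T" by (simp add: per1_def)
  have fN: "1 * s' (Suc N) H = Xb1 (Suc N) - G (Suc N) (Suc T) per1 s' (Suc (per1 (Suc N))) (H + stage_sum (Suc N) per1 s' (per1 (Suc N)) H)"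
    using foc[OF spe1 _ _ _, of "Suc N" 1 b2] apos1 G2 pN slope_last[of "Suc N" "Suc T" per1] by simp
  hence xnE: "xn = Xc - (H + xn)" using pN ssl G_last xn_def by (simp add: Xb1_def)
  have H2: "hist (Suc N) per1 s' (Suc (Suc T)) = H + xn" using H1 ssl xn_def by simp
  fix i assume i: "i \<in> {1..N}"
  define t where "t = per i"
  have tT: "t \<le> T" "1 \<le> t" using perN[OF i] t_def by auto
  define x where "x = outcome N per s i"
  define m where "m = slope N T per (Suc t)"
  have mpos: "m > 0" by (simp add: m_def slope_pos)
  obtain b where Gb: "\<forall>Y. G N T per s (Suc t) Y = b + m * Y"
    using affine[OF spe a_pos, of "Suc t"] tT m_def by auto
  have f0: "m * s i (hist N per s t) = Xb i - G N T per s (Suc (per i)) (hist N per s t + stage_sum N per s (per i) (hist N per s t))"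
    using foc[OF spe i _ mpos, of b] a_pos i Gb t_def by simp
  have "G N T per s (Suc (per i)) (hist N per s t + stage_sum N per s (per i) (hist N per s t)) = H"
    using onpath[of "Suc t" T N per s] tT t_def H_def by simp
  hence e0: "m * x = Xb i - H" using f0 x_def t_def by (simp add: outcome_def)
  have m1: "slope (Suc N) (Suc T) per1 (Suc t) = m/2" using slope1[of "Suc t"] tT m_def by simp
  obtain b1 where Gb1: "\<forall>Y. G (Suc N) (Suc T) per1 s' (Suc t) Y = b1 + (m/2) * Y"
    using affine[OF spe1 apos1, of "Suc t"] tT m1 by auto
  have i1: "i \<in> {1..Suc N}" using i by simp
  have pi1: "per1 i = t" using i t_def by (simp add: per1_def)
  have m2: "m/2 > 0" using mpos by simp
  have f1: "(m/2) * s' i (hist (Suc N) per1 s' t) = Xb1 i - G (Suc N) (Suc T) per1 s' (Suc (per1 i)) (hist (Suc N) per1 s' t + stage_sum (Suc N) per1 s' (per1 i) (hist (Suc N) per1 s' t))"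
    using foc[OF spe1 i1 _ m2, of b1] apos1 i1 Gb1 pi1 by simp
  have "G (Suc N) (Suc T) per1 s' (Suc (per1 i)) (hist (Suc N) per1 s' t + stage_sum (Suc N) per1 s' (per1 i) (hist (Suc N) per1 s' t)) = H + xn"
    using onpath[of "Suc t" "Suc T" "Suc N" per1 s'] tT pi1 H2 by simp
  moreover have "s' i (hist (Suc N) per1 s' t) = x"
  proof -
    have "outcome (Suc N) per1 s' i = outcome N per s i" using same1 i by blast
    thus ?thesis unfolding x_def outcome_def pi1 .
  qed
  moreover have "Xb1 i = Xb i" using i by (simp add: Xb1_def)
  ultimately have e1: "(m/2) * x = Xb i - (H + xn)" using f1 by simp
  show "Xb i = Xc" using e0 e1 xnE by (simp add: algebra_simps)
qed

end
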